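(* Let $(L,\le)$ be an infinite linearly ordered set and $\kappa:L\to\{+,-,0\}$ a coloring such that $L$ is not of type $\infty_{+,-,0}$. Then $L$ can be decomposed into finitely many intervals $L=L_1\,\dot\cup\,L_2\,\dot\cup\cdots\dot\cup\,L_m$ with $L_1\prec L_2\prec\cdots\prec L_m$ such that $|\kappa(L_i)|\le 2$ for every $i\le m$.
   Context: $L$ is of type $\infty_{+,-,0}$ if for every natural number $n$ there is a sequence $a_1<a_2<\dots<a_{3(n+1)}$ in $L$ with $\kappa(a_{3i+1})=+$, $\kappa(a_{3i+2})=-$, $\kappa(a_{3i+3})=0$ for all $i\le n$. For intervals $I,J$, $I\prec J$ means $a<b$ for all $a\in I$, $b\in J$. *)

theory Defs
  imports Main
begin

datatype color = Plus | Minus | Zero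

definition type_inf_pmz :: "'a::linorder set \<Rightarrow> ('a \<Rightarrow> color) \<Rightarrow> bool" where
  "type_inf_pmz L \<kappa> \<longleftrightarrow>
     (\<forall>n::nat. \<exists>a::nat \<Rightarrow> 'a.
        (\<forall>j\<in>{1..3*(n+1)}. a j \<in> L) \<and>
        (\<forall>j\<in>{1..<3*(n+1)}. a j < a (Suc j)) \<and>
        (\<forall>i\<le>n. \<kappa> (a (3*i+1)) = Plus \<and> \<kappa> (a (3*i+2)) = Minus \<and> \<kappa> (a (3*i+3)) = Zero))"

definition interval_in :: "'a::linorder set \<Rightarrow> 'a set \<Rightarrow> bool" where
  "interval_in L I \<longleftrightarrow> I \<subseteq> L \<and> (\<forall>x\<in>I. \<forall>z\<in>I. \<forall>y\<in>L. x \<le> y \<and> y \<le> z \<longrightarrow> y \<in> I)"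

definition prec :: "'a::linorder set \<Rightarrow> 'a set \<Rightarrow> bool" (infix "\<prec>" 50) where
  "I \<prec> J \<longleftrightarrow> (\<forall>a\<in>I. \<forall>b\<in>J. a < b)"

end

theory Submission
  imports Defs
begin

definition pat :: "nat \<Rightarrow> color" where
  "pat j = (if j mod 3 = 1 then Plus else if j mod 3 = 2 then Minus else Zero)"

definition mtch :: "'a::linorder set \<Rightarrow> ('a \<Rightarrow> color) \<Rightarrow> 'a \<Rightarrow> nat \<Rightarrow> bool" where
  "mtch L \<kappa> x m \<longleftrightarrow> (\<exists>a::nat \<Rightarrow> 'a. (\<forall>j\<in>{1..m}. a j \<in> L \<and> a j \<le> x \<and> \<kappa> (a j) = pat j)
      \<and> (\<forall>j\<in>{1..<m}. a j < a (Suc j)))"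

lemma pat_neq: "pat j \<noteq> pat (Suc j)"
  unfolding pat_def by (auto simp: mod_Suc split: if_splits)

lemma mtch_down: "mtch L \<kappa> x m \<Longrightarrow> k \<le> m \<Longrightarrow> mtch L \<kappa> x k"
  unfolding mtch_def by (meson atLeastAtMost_iff atLeastLessThan_iff le_trans less_le_trans)

lemma mtch_mono: "mtch L \<kappa> x m \<Longrightarrow> x \<le> y \<Longrightarrow> mtch L \<kappa> y m"
  unfolding mtch_def by (meson order_trans)

lemma mtch_0: "mtch L \<kappa> x 0"
  unfolding mtch_def by auto

lemma color_cases: "c = Plus \<or> c = Minus \<or> c = Zero"
  by (cases c) auto

lemma card_le2: "\<kappa> ` F \<subseteq> - {c::color} \<Longrightarrow> card (\<kappa> ` F) \<le> 2"
proof -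
  assume h: "\<kappa> ` F \<subseteq> - {c}"
  have "- {c} = (if c = Plus then {Minus, Zero} else if c = Minus then {Plus, Zero} else {Plus, Minus})"
    using color_cases by auto
  then have f: "finite (- {c})" "card (- {c}) \<le> 2" by (auto simp: card_insert_if)
  show ?thesis using card_mono[OF f(1) h] f(2) by linarith
qed

lemma mtch_ext:
  assumes "mtch L \<kappa> x m" "x \<in> L" "\<kappa> x = pat (Suc m)"
  shows "mtch L \<kappa> x (Suc m)"
proof -
  obtain a where a: "\<forall>j\<in>{1..m}. a j \<in> L \<and> a j \<le> x \<and> \<kappa> (a j) = pat j"
      "\<forall>j\<in>{1..<m}. a j < a (Suc j)" using assms(1) unfolding mtch_def by blast
  define b where "b = a(Suc m := x)"
  have lt: "a m < x" if "m \<ge> 1"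
  proof -
    have "a m \<le> x" "\<kappa> (a m) = pat m" using a(1) that by auto
    moreover have "a m \<noteq> x" using pat_neq[of m] assms(3) calculation by auto
    ultimately show ?thesis by auto
  qed
  have "\<forall>j\<in>{1..Suc m}. b j \<in> L \<and> b j \<le> x \<and> \<kappa> (b j) = pat j"
    using a(1) assms unfolding b_def by (auto simp: le_Suc_eq)
  moreover have "\<forall>j\<in>{1..<Suc m}. b j < b (Suc j)"
    using a(2) lt unfolding b_def by (auto simp: less_Suc_eq)
  ultimately show ?thesis unfolding mtch_def by blast
qed

theorem proposition2p2:
  fixes L :: "'a::linorder set" and \<kappa> :: "'a \<Rightarrow> color"
  assumes "infinite L"
    and "\<not> type_inf_pmz L \<kappa>"
  shows "\<exists>Ls :: 'a set list.
           (\<forall>i<length Ls. Ls ! i \<noteq> {} \<and> interval_in L (Ls ! i)) \<and>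
           (\<Union>i<length Ls. Ls ! i) = L \<and>
           (\<forall>i j. i < j \<and> j < length Ls \<longrightarrow> Ls ! i \<prec> Ls ! j) \<and>
           (\<forall>i<length Ls. card (\<kappa> ` (Ls ! i)) \<le> 2)"
proof -
  obtain n where n: "\<not> (\<exists>a::nat \<Rightarrow> 'a.
        (\<forall>j\<in>{1..3*(n+1)}. a j \<in> L) \<and>
        (\<forall>j\<in>{1..<3*(n+1)}. a j < a (Suc j)) \<and>
        (\<forall>i\<le>n. \<kappa> (a (3*i+1)) = Plus \<and> \<kappa> (a (3*i+2)) = Minus \<and> \<kappa> (a (3*i+3)) = Zero))"
    using assms(2) unfolding type_inf_pmz_def by blast
  define K where "K = 3*(n+1)"
  have noK: "\<not> mtch L \<kappa> x K" for x
  proof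
    assume "mtch L \<kappa> x K"
    then obtain a where a: "\<forall>j\<in>{1..K}. a j \<in> L \<and> a j \<le> x \<and> \<kappa> (a j) = pat j"
      "\<forall>j\<in>{1..<K}. a j < a (Suc j)" unfolding mtch_def by blast
    have "\<forall>i\<le>n. \<kappa> (a (3*i+1)) = Plus \<and> \<kappa> (a (3*i+2)) = Minus \<and> \<kappa> (a (3*i+3)) = Zero"
    proof (intro allI impI)
      fix i assume "i \<le> n"
      then have "3*i+1 \<in> {1..K}" "3*i+2 \<in> {1..K}" "3*i+3 \<in> {1..K}" unfolding K_def by auto
      moreover have "pat (3*i+1) = Plus" "pat (3*i+2) = Minus" "pat (3*i+3) = Zero"
        unfolding pat_def by (simp_all add: mod_Suc)
      ultimately show "\<kappa> (a (3*i+1)) = Plus \<and> \<kappa> (a (3*i+2)) = Minus \<and> \<kappa> (a (3*i+3)) = Zero"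
        using a(1) by metis
    qed
    then show False using n a unfolding K_def by blast
  qed
  define F where "F m = {x\<in>L. mtch L \<kappa> x m \<and> \<not> mtch L \<kappa> x (Suc m)}" for m
  define Ls where "Ls = filter (\<lambda>I. I \<noteq> {}) (map F [0..<K])"
  have cover: "\<exists>m<K. x \<in> F m" if "x \<in> L" for x
  proof (rule ccontr)
    assume "\<not> ?thesis"
    then have "\<forall>m<K. mtch L \<kappa> x m \<longrightarrow> mtch L \<kappa> x (Suc m)" using that unfolding F_def by auto
    then have "m \<le> K \<Longrightarrow> mtch L \<kappa> x m" for m
      by (induction m) (auto simp: mtch_0)
    then show False using noK by blast
  qed
  have int: "interval_in L (F m)" for m
    unfolding interval_in_def F_def using mtch_mono by blast
  have col: "card (\<kappa> ` F m) \<le> 2" for m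
  proof (rule card_le2[of _ _ "pat (Suc m)"])
    show "\<kappa> ` F m \<subseteq> - {pat (Suc m)}"
      unfolding F_def using mtch_ext by fastforce
  qed
  have precF: "F a \<prec> F b" if "a < b" for a b
    unfolding prec_def
  proof (intro ballI)
    fix x y assume x: "x \<in> F a" and y: "y \<in> F b"
    show "x < y"
    proof (rule ccontr)
      assume "\<not> x < y"
      then have "y \<le> x" by auto
      then have "mtch L \<kappa> x b" using y mtch_mono unfolding F_def by blast
      then have "mtch L \<kappa> x (Suc a)" using mtch_down that by (metis Suc_leI)
      then show False using x unfolding F_def by blast
    qed
  qed
  have sw: "sorted_wrt (\<prec>) (map F [0..<K])"
    unfolding sorted_wrt_map using precF by (auto simp: sorted_wrt_iff_nth_less)
  have sw2: "sorted_wrt (\<prec>) Ls" unfolding Ls_def by (rule sorted_wrt_filter[OF sw])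
  have setLs: "set Ls = {I \<in> F ` {0..<K}. I \<noteq> {}}" unfolding Ls_def by auto
  show ?thesis
  proof (intro exI conjI allI impI)
    fix i assume "i < length Ls"
    then have "Ls ! i \<in> set Ls" by simp
    then show "Ls ! i \<noteq> {}" "interval_in L (Ls ! i)" "card (\<kappa> ` (Ls ! i)) \<le> 2"
      using setLs int col by auto
  next
    have "(\<Union>i<length Ls. Ls ! i) = \<Union> (set Ls)"
      by (auto simp: in_set_conv_nth) (metis nth_mem)
    also have "\<dots> = L"
    proof
      show "\<Union> (set Ls) \<subseteq> L" using setLs unfolding F_def by auto
      show "L \<subseteq> \<Union> (set Ls)" using cover setLs by fastforce
    qed
    finally show "(\<Union>i<length Ls. Ls ! i) = L" .
  next
    fix i j assume "i < j \<and> j < length Ls"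
    then show "Ls ! i \<prec> Ls ! j" using sw2 by (auto simp: sorted_wrt_iff_nth_less)
  qed
qed

end
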